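(* Let $\gamma\in\mathbb{C}\setminus\{0\}$. The group $\Gamma_\gamma$ is not free if and only if $\gamma$ is a fixed point of some word polynomial $p_w$ ($w$ a good word), i.e. $p_w(\gamma)=\gamma$. Further, if $\gamma$ is an eventually periodic point of some word polynomial $p_w$ (i.e. $p_w^{(n)}(\gamma)$ is a periodic point of $p_w$ for some $n\ge0$), then $\Gamma_\gamma$ is not free.
   Context: $\Gamma_\gamma=\langle \pm\begin{pmatrix}1&1\\0&1\end{pmatrix},\pm\begin{pmatrix}1&0\\ \gamma&1\end{pmatrix}\rangle\subset PSL(2,\mathbb{C})$, a group generated by two parabolics. For $x,y\in PSL(2,\mathbb{C})$, $\gamma(x,y)=\operatorname{tr}[x,y]-2$. A good word is a reduced word $w=a^{m_1}ba^{m_2}b\cdots ba^{m_n}$ in $\langle a,b\mid b^2=1\rangle$ with $n\ge3$ and $m_i\ne0$ for $2\le i\le n-1$; its word polynomial $p_w\in\mathbb{Z}[z]$ is the unique polynomial with $\gamma(f,w(f,\phi))=p_w(\gamma(f,\phi))$ for every parabolic $f$ and every order-two elliptic $\phi$ in $PSL(2,\mathbb{C})$ ($w(f,\phi)$: substitute $a=f,b=\phi$). $p^{(k)}$ denotes the $k$-th iterate of $p$. *)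

theory Defs
  imports Complex_Main "HOL-Computational_Algebra.Polynomial"
begin

text \<open>2x2 complex matrices; elements of PSL(2,C) are represented by matrices of
determinant 1, two matrices M, N representing the same element iff M = N or M = -N.\<close>

datatype mat2 = Mat complex complex complex complex

fun mmul :: "mat2 \<Rightarrow> mat2 \<Rightarrow> mat2" where
  "mmul (Mat a b c d) (Mat e f g h) =
     Mat (a*e + b*g) (a*f + b*h) (c*e + d*g) (c*f + d*h)"

fun mdet :: "mat2 \<Rightarrow> complex" where
  "mdet (Mat a b c d) = a*d - b*c"

fun mtr :: "mat2 \<Rightarrow> complex" where
  "mtr (Mat a b c d) = a + d"

fun mneg :: "mat2 \<Rightarrow> mat2" where
  "mneg (Mat a b c d) = Mat (-a) (-b) (-c) (-d)"

text \<open>Adjugate; this is the inverse of a determinant-one matrix.\<close>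
fun madj :: "mat2 \<Rightarrow> mat2" where
  "madj (Mat a b c d) = Mat d (-b) (-c) a"

definition mI :: mat2 where "mI = Mat 1 0 0 1"

fun mpow :: "mat2 \<Rightarrow> nat \<Rightarrow> mat2" where
  "mpow M 0 = mI"
| "mpow M (Suc n) = mmul M (mpow M n)"

definition mpowi :: "mat2 \<Rightarrow> int \<Rightarrow> mat2" where
  "mpowi M k = (if 0 \<le> k then mpow M (nat k) else mpow (madj M) (nat (-k)))"

definition SL2 :: "mat2 \<Rightarrow> bool" where "SL2 M \<longleftrightarrow> mdet M = 1"

definition psl_eq :: "mat2 \<Rightarrow> mat2 \<Rightarrow> bool" where
  "psl_eq M N \<longleftrightarrow> M = N \<or> M = mneg N"

definition commut :: "mat2 \<Rightarrow> mat2 \<Rightarrow> mat2" where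
  "commut x y = mmul x (mmul y (mmul (madj x) (madj y)))"

definition gam :: "mat2 \<Rightarrow> mat2 \<Rightarrow> complex" where
  "gam x y = mtr (commut x y) - 2"

definition parabolic :: "mat2 \<Rightarrow> bool" where
  "parabolic f \<longleftrightarrow> SL2 f \<and> (mtr f = 2 \<or> mtr f = -2) \<and> \<not> psl_eq f mI"

definition elliptic2 :: "mat2 \<Rightarrow> bool" where
  "elliptic2 \<phi> \<longleftrightarrow> SL2 \<phi> \<and> psl_eq (mmul \<phi> \<phi>) mI \<and> \<not> psl_eq \<phi> mI"

text \<open>A word a^m1 b a^m2 b ... b a^mn in <a,b | b^2=1> is encoded by the list [m1,...,mn].
  It is good iff n >= 3 and m_i \<noteq> 0 for 2 <= i <= n-1 (then it is automatically reduced).\<close>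
definition good_word :: "int list \<Rightarrow> bool" where
  "good_word ms \<longleftrightarrow> length ms \<ge> 3 \<and> (\<forall>i. 1 \<le> i \<and> i < length ms - 1 \<longrightarrow> ms ! i \<noteq> 0)"

fun weval :: "mat2 \<Rightarrow> mat2 \<Rightarrow> int list \<Rightarrow> mat2" where
  "weval f \<phi> [] = mI"
| "weval f \<phi> [m] = mpowi f m"
| "weval f \<phi> (m # m' # ms) = mmul (mpowi f m) (mmul \<phi> (weval f \<phi> (m' # ms)))"

definition is_word_poly :: "int list \<Rightarrow> int poly \<Rightarrow> bool" where
  "is_word_poly w p \<longleftrightarrow>
     (\<forall>f \<phi>. parabolic f \<longrightarrow> elliptic2 \<phi> \<longrightarrow>
        gam f (weval f \<phi> w) = poly (map_poly of_int p) (gam f \<phi>))"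

text \<open>The word polynomial p_w (the unique polynomial with the property above).\<close>
definition word_poly :: "int list \<Rightarrow> int poly" where
  "word_poly w = (THE p. is_word_poly w p)"

definition wpoly :: "int list \<Rightarrow> complex \<Rightarrow> complex" where
  "wpoly w z = poly (map_poly of_int (word_poly w)) z"

text \<open>The group Gamma_gamma generated by A = [[1,1],[0,1]] and B = [[1,0],[gamma,1]].\<close>
definition genA :: mat2 where "genA = Mat 1 1 0 1"
definition genB :: "complex \<Rightarrow> mat2" where "genB \<gamma> = Mat 1 0 \<gamma> 1"

text \<open>Words in the free group on two letters: lists of (letter, exponent),
  letter True = A, False = B.\<close>
fun feval :: "complex \<Rightarrow> (bool \<times> int) list \<Rightarrow> mat2" where
  "feval \<gamma> [] = mI"
| "feval \<gamma> ((g, k) # ws) = mmul (mpowi (if g then genA else genB \<gamma>) k) (feval \<gamma> ws)"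

definition reduced_fword :: "(bool \<times> int) list \<Rightarrow> bool" where
  "reduced_fword ws \<longleftrightarrow> ws \<noteq> [] \<and> (\<forall>x\<in>set ws. snd x \<noteq> 0) \<and>
     (\<forall>i. i + 1 < length ws \<longrightarrow> fst (ws ! i) \<noteq> fst (ws ! (i + 1)))"

definition Gamma_free :: "complex \<Rightarrow> bool" where
  "Gamma_free \<gamma> \<longleftrightarrow> (\<forall>ws. reduced_fword ws \<longrightarrow> \<not> psl_eq (feval \<gamma> ws) mI)"

end

theory Submission
  imports Defs
begin


notation mmul (infixl "\<star>" 70)

lemma mmul_assoc: "(x \<star> y) \<star> z = x \<star> (y \<star> z)"
  by (cases x; cases y; cases z) (simp add: algebra_simps)

lemma mI_left[simp]: "mI \<star> x = x" and mI_right[simp]: "x \<star> mI = x"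
  by (cases x; simp add: mI_def)+

lemma mdet_mmul[simp]: "mdet (x \<star> y) = mdet x * mdet y"
  by (cases x; cases y) (simp add: algebra_simps)

lemma madj_mmul: "madj (x \<star> y) = madj y \<star> madj x"
  by (cases x; cases y) (simp add: algebra_simps)

lemma madj_madj[simp]: "madj (madj x) = x"
  by (cases x) simp

lemma mdet_madj[simp]: "mdet (madj x) = mdet x"
  by (cases x) (simp add: algebra_simps)

lemma mmul_madj: "mdet x = 1 \<Longrightarrow> x \<star> madj x = mI"
  by (cases x) (simp add: mI_def algebra_simps)

lemma madj_mmul_self: "mdet x = 1 \<Longrightarrow> madj x \<star> x = mI"
  by (cases x) (simp add: mI_def algebra_simps)

lemma mneg_mmul_left[simp]: "mneg x \<star> y = mneg (x \<star> y)"
  and mneg_mmul_right[simp]: "x \<star> mneg y = mneg (x \<star> y)"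
  by (cases x; cases y; simp add: algebra_simps)+

lemma mneg_mneg[simp]: "mneg (mneg x) = x" by (cases x) simp
lemma madj_mneg[simp]: "madj (mneg x) = mneg (madj x)" by (cases x) simp
lemma mdet_mneg[simp]: "mdet (mneg x) = mdet x" by (cases x) simp
lemma madj_mI[simp]: "madj mI = mI" by (simp add: mI_def)
lemma mdet_mI[simp]: "mdet mI = 1" by (simp add: mI_def)

lemma mneg_neq: "mneg x \<noteq> x \<or> x = Mat 0 0 0 0"
  by (cases x) auto

lemma mneg_inj[simp]: "mneg x = mneg y \<longleftrightarrow> x = y"
  by (cases x; cases y) auto
lemma psl_eq_refl[simp]: "psl_eq x x" by (simp add: psl_eq_def)
lemma psl_eq_sym: "psl_eq x y \<Longrightarrow> psl_eq y x"
  by (auto simp: psl_eq_def)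
lemma psl_eq_trans: "psl_eq x y \<Longrightarrow> psl_eq y z \<Longrightarrow> psl_eq x z"
  by (auto simp: psl_eq_def)
lemma psl_eq_mneg1[simp]: "psl_eq (mneg x) y \<longleftrightarrow> psl_eq x y"
  by (auto simp: psl_eq_def)
lemma psl_eq_mneg2[simp]: "psl_eq x (mneg y) \<longleftrightarrow> psl_eq x y"
  by (auto simp: psl_eq_def)
lemma psl_eq_mmul: "psl_eq x x' \<Longrightarrow> psl_eq y y' \<Longrightarrow> psl_eq (x \<star> y) (x' \<star> y')"
  by (auto simp: psl_eq_def)

lemma mpow_mneg: "mpow (mneg x) n = (if even n then mpow x n else mneg (mpow x n))"
  by (induction n) auto

lemma mpowi_mneg: "psl_eq (mpowi (mneg x) k) (mpowi x k)"
  by (simp add: mpowi_def mpow_mneg)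

lemma mpow_det: "mdet x = 1 \<Longrightarrow> mdet (mpow x n) = 1"
  by (induction n) auto
lemma mpowi_det: "mdet x = 1 \<Longrightarrow> mdet (mpowi x k) = 1"
  by (simp add: mpowi_def mpow_det)

lemma mpow_conj: "mdet g = 1 \<Longrightarrow> mpow (g \<star> x \<star> madj g) n = g \<star> mpow x n \<star> madj g"
proof (induction n)
  case 0 then show ?case by (simp add: mmul_madj)
next
  case (Suc n)
  have "mpow (g \<star> x \<star> madj g) (Suc n) = g \<star> x \<star> madj g \<star> (g \<star> mpow x n \<star> madj g)"
    using Suc by simp
  also have "\<dots> = g \<star> x \<star> (madj g \<star> g) \<star> mpow x n \<star> madj g" by (simp add: mmul_assoc)
  also have "\<dots> = g \<star> mpow x (Suc n) \<star> madj g" using Suc.prems by (simp add: madj_mmul_self mmul_assoc)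
  finally show ?case .
qed

lemma madj_conj: "madj (g \<star> x \<star> madj g) = g \<star> madj x \<star> madj g"
  by (simp add: madj_mmul mmul_assoc)

lemma mpowi_conj: "mdet g = 1 \<Longrightarrow> mpowi (g \<star> x \<star> madj g) k = g \<star> mpowi x k \<star> madj g"
  by (simp add: mpowi_def mpow_conj madj_conj)

definition Ap :: "complex \<Rightarrow> mat2" where "Ap t = Mat 1 t 0 1"
definition phi :: "complex \<Rightarrow> mat2" where "phi c = Mat 0 (-1/c) c 0"

lemma genA_Ap: "genA = Ap 1" by (simp add: genA_def Ap_def)
lemma Ap_0[simp]: "Ap 0 = mI" by (simp add: Ap_def mI_def)
lemma Ap_mul[simp]: "Ap s \<star> Ap t = Ap (s + t)" by (simp add: Ap_def)
lemma madj_Ap[simp]: "madj (Ap t) = Ap (-t)" by (simp add: Ap_def)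
lemma mdet_Ap[simp]: "mdet (Ap t) = 1" by (simp add: Ap_def)
lemma genB_0[simp]: "genB 0 = mI" by (simp add: genB_def mI_def)
lemma genB_mul[simp]: "genB s \<star> genB t = genB (s + t)" by (simp add: genB_def)
lemma madj_genB[simp]: "madj (genB t) = genB (-t)" by (simp add: genB_def)
lemma mdet_genB[simp]: "mdet (genB t) = 1" by (simp add: genB_def)

lemma mpow_Ap: "mpow (Ap x) n = Ap (of_nat n * x)"
  by (induction n) (auto simp: algebra_simps)
lemma mpowi_Ap: "mpowi (Ap x) k = Ap (of_int k * x)"
  by (simp add: mpowi_def mpow_Ap)
lemma mpow_genB: "mpow (genB x) n = genB (of_nat n * x)"
  by (induction n) (auto simp: algebra_simps)
lemma mpowi_genB: "mpowi (genB x) k = genB (of_int k * x)"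
  by (simp add: mpowi_def mpow_genB)
lemma mpowi_genA: "mpowi genA k = Ap (of_int k)"
  by (simp add: genA_Ap mpowi_Ap)



lemma mp_add: "map_poly (of_int::int\<Rightarrow>complex) (p + q) = map_poly of_int p + map_poly of_int q"
  by (rule poly_eqI) (simp add: coeff_map_poly)
lemma mp_mult: "map_poly (of_int::int\<Rightarrow>complex) (p * q) = map_poly of_int p * map_poly of_int q"
  by (rule poly_eqI) (simp add: coeff_map_poly coeff_mult)
lemma mp_minus: "map_poly (of_int::int\<Rightarrow>complex) (- p) = - map_poly of_int p"
  by (rule poly_eqI) (simp add: coeff_map_poly)
lemma mp_const: "map_poly (of_int::int\<Rightarrow>complex) [:a:] = [:of_int a:]"
  by (rule poly_eqI) (simp add: coeff_map_poly coeff_pCons split: nat.splits)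
lemma mp_X: "map_poly (of_int::int\<Rightarrow>complex) [:0,1:] = [:0,1:]"
  by (rule poly_eqI) (simp add: coeff_map_poly coeff_pCons split: nat.splits)
lemma mp_inj: "map_poly (of_int::int\<Rightarrow>complex) p = map_poly of_int q \<Longrightarrow> p = q"
  by (metis (no_types, lifting) coeff_map_poly of_int_0 of_int_eq_iff poly_eqI)

definition evi :: "int poly \<Rightarrow> complex \<Rightarrow> complex" where
  "evi p z = poly (map_poly of_int p) z"

lemma evi_add[simp]: "evi (p + q) z = evi p z + evi q z"
  by (simp add: evi_def mp_add)
lemma evi_mult[simp]: "evi (p * q) z = evi p z * evi q z"
  by (simp add: evi_def mp_mult)
lemma evi_minus[simp]: "evi (- p) z = - evi p z"
  by (simp add: evi_def mp_minus)
lemma evi_const[simp]: "evi [:a:] z = of_int a"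
  by (simp add: evi_def mp_const)
lemma evi_X[simp]: "evi [:0,1:] z = z"
  by (simp add: evi_def mp_X)
lemma evi_diff[simp]: "evi (p - q) z = evi p z - evi q z"
  using evi_add[of p "-q" z] by simp
lemma evi_pCons[simp]: "evi (pCons a p) z = of_int a + z * evi p z"
  by (simp add: evi_def map_poly_pCons)
lemma evi_smult[simp]: "evi (smult a p) z = of_int a * evi p z"
proof -
  have "smult a p = [:a:] * p" by simp
  then show ?thesis by (metis evi_mult evi_const)
qed
lemma evi_0[simp]: "evi 0 z = 0" by (simp add: evi_def)
lemma evi_1[simp]: "evi 1 z = 1" by (simp add: evi_def)
lemma evi_pow[simp]: "evi (p ^ n) z = evi p z ^ n"
  by (induction n) auto

type_synonym cls = "bool \<times> int poly \<times> int poly \<times> int poly \<times> int poly"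

fun enc :: "int list \<Rightarrow> cls" where
  "enc [] = (False, 1, 0, 0, 1)"
| "enc [m] = (False, 1, [:m:], 0, 1)"
| "enc (m # m' # ms) = (case enc (m' # ms) of (b, p, q, r, s) \<Rightarrow>
     if b then (False, -r + [:m:] * [:0,1:] * p, -s + [:m:] * q, p, q)
     else (True, -r + [:m:] * p, -s + [:m:] * [:0,1:] * q, p, q))"

fun decode :: "complex \<Rightarrow> cls \<Rightarrow> mat2" where
  "decode c (b, p, q, r, s) = (let z = c^2 in
     if b then Mat (c * evi p z) (evi q z / c) (c * evi r z) (c * evi s z)
     else Mat (evi p z) (evi q z) (z * evi r z) (evi s z))"

lemma weval_enc: "c \<noteq> 0 \<Longrightarrow> weval genA (phi c) w = decode c (enc w)"
proof (induction "genA" "phi c" w rule: weval.induct)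
  case 1 then show ?case by (simp add: mI_def)
next
  case (2 m) then show ?case by (simp add: mpowi_genA Ap_def)
next
  case (3 m m' ms)
  obtain b p q r s where e: "enc (m' # ms) = (b, p, q, r, s)" by (cases "enc (m' # ms)") auto
  have IH: "weval genA (phi c) (m' # ms) = decode c (b, p, q, r, s)" using 3 e by simp
  show ?case
  proof (cases b)
    case True
    then show ?thesis using IH e 3(2)
      by (simp add: mpowi_genA Ap_def phi_def Let_def) (simp add: field_simps power2_eq_square)
  next
    case False
    then show ?thesis using IH e 3(2)
      by (simp add: mpowi_genA Ap_def phi_def Let_def) (simp add: field_simps power2_eq_square)
  qed
qed

fun ll :: "mat2 \<Rightarrow> complex" where "ll (Mat a b c d) = c"

definition P :: "int list \<Rightarrow> int poly" where
  "P w = (case enc w of (b, p, q, r, s) \<Rightarrow> if b then [:0,1:] * r^2 else [:0,0,1:] * r^2)"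

lemma ll_weval: "c \<noteq> 0 \<Longrightarrow> (ll (weval genA (phi c) w))^2 = evi (P w) (c^2)"
proof -
  assume c: "c \<noteq> 0"
  obtain b p q r s where e: "enc w = (b, p, q, r, s)" by (cases "enc w") auto
  show ?thesis using c e by (cases b) (simp_all add: weval_enc P_def Let_def power_mult_distrib power2_eq_square)
qed

lemma P_0: "evi (P w) 0 = 0"
  by (cases "enc w") (auto simp: P_def)



lemma cancel1: "mdet g = 1 \<Longrightarrow> madj g \<star> (g \<star> z) = z"
  by (metis mI_left madj_mmul_self mmul_assoc)
lemma cancel2: "mdet g = 1 \<Longrightarrow> g \<star> (madj g \<star> z) = z"
  by (metis mI_left mmul_madj mmul_assoc)

lemma conj_mul: "mdet g = 1 \<Longrightarrow> (g \<star> x \<star> madj g) \<star> (g \<star> y \<star> madj g) = g \<star> (x \<star> y) \<star> madj g"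
  by (simp add: mmul_assoc cancel1)

lemma weval_conj: "mdet g = 1 \<Longrightarrow>
  weval (g \<star> f \<star> madj g) (g \<star> \<phi> \<star> madj g) w = g \<star> weval f \<phi> w \<star> madj g"
proof (induction f \<phi> w rule: weval.induct)
  case (1 f \<phi>) then show ?case by (simp add: mmul_madj)
next
  case (2 f \<phi> m) then show ?case by (simp add: mpowi_conj)
next
  case (3 f \<phi> m m' ms)
  then show ?case by (simp add: mpowi_conj conj_mul)
qed

lemma mtr_conj: "mdet g = 1 \<Longrightarrow> mtr (g \<star> x \<star> madj g) = mtr x"
proof -
  assume d: "mdet g = 1"
  obtain a b c e where g: "g = Mat a b c e" by (cases g)
  obtain p q r s where x: "x = Mat p q r s" by (cases x)
  have "a * e - b * c = 1" using d g by simp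
  then show ?thesis unfolding g x by simp algebra
qed

lemma commut_conj: "mdet g = 1 \<Longrightarrow>
  commut (g \<star> x \<star> madj g) (g \<star> y \<star> madj g) = g \<star> commut x y \<star> madj g"
  by (simp add: commut_def madj_conj conj_mul)

lemma gam_conj: "mdet g = 1 \<Longrightarrow> gam (g \<star> x \<star> madj g) (g \<star> y \<star> madj g) = gam x y"
  by (simp add: gam_def commut_conj mtr_conj)

lemma gam_mneg1[simp]: "gam (mneg x) y = gam x y"
  by (simp add: gam_def commut_def)
lemma gam_mneg2[simp]: "gam x (mneg y) = gam x y"
  by (simp add: gam_def commut_def)
lemma gam_psl2: "psl_eq y y' \<Longrightarrow> gam x y = gam x y'"
  by (auto simp: psl_eq_def)

lemma weval_mneg: "psl_eq (weval (mneg f) \<phi> w) (weval f \<phi> w)"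
proof (induction f \<phi> w rule: weval.induct)
  case (2 f \<phi> m) then show ?case by (simp add: mpowi_mneg)
next
  case (3 f \<phi> m m' ms)
  then show ?case by (simp add: psl_eq_mmul mpowi_mneg)
qed simp

lemma mdet_weval: "mdet f = 1 \<Longrightarrow> mdet \<phi> = 1 \<Longrightarrow> mdet (weval f \<phi> w) = 1"
  by (induction f \<phi> w rule: weval.induct) (auto simp: mpowi_det)

lemma gam_genA: "mdet y = 1 \<Longrightarrow> gam genA y = (ll y)^2"
proof -
  assume d: "mdet y = 1"
  obtain p q r s where y: "y = Mat p q r s" by (cases y)
  have "p * s - q * r = 1" using d y by simp
  then show ?thesis unfolding y by (simp add: gam_def commut_def genA_def power2_eq_square) algebra
qed

lemma ell_tr: "elliptic2 \<phi> \<Longrightarrow> mtr \<phi> = 0"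
proof -
  assume e: "elliptic2 \<phi>"
  obtain a b c d where p: "\<phi> = Mat a b c d" by (cases \<phi>)
  have det: "a * d - b * c = 1" using e p by (simp add: elliptic2_def SL2_def)
  have sq: "psl_eq (\<phi> \<star> \<phi>) mI" and n: "\<not> psl_eq \<phi> mI" using e by (auto simp: elliptic2_def)
  show ?thesis
  proof (rule ccontr)
    assume t: "mtr \<phi> \<noteq> 0"
    then have t': "a + d \<noteq> 0" using p by simp
    from sq consider "\<phi> \<star> \<phi> = mI" | "\<phi> \<star> \<phi> = mneg mI" by (auto simp: psl_eq_def)
    then show False
    proof cases
      case 1
      then have "b * (a + d) = 0" "c * (a + d) = 0" "a*a + b*c = 1" "d*d + b*c = 1"
        using p by (auto simp: mI_def algebra_simps)
      then have bc: "b = 0" "c = 0" using t' by auto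
      then have "a * d = 1" "a * a = 1" "d * d = 1" using det \<open>a*a+b*c=1\<close> \<open>d*d+b*c=1\<close> by auto
      then have "a = d" by (metis mult.commute mult_cancel_left one_neq_zero mult_zero_left)
      then have "\<phi> = mI \<or> \<phi> = mneg mI" using p bc \<open>a*a=1\<close>
        by (auto simp: mI_def) (metis power2_eq_1_iff power2_eq_square)+
      then show False using n by (auto simp: psl_eq_def)
    next
      case 2
      then have "b * (a + d) = 0" "c * (a + d) = 0" "a*a + b*c = -1" "d*d + b*c = -1"
        using p by (auto simp: mI_def algebra_simps)
      then have bc: "b = 0" "c = 0" using t' by auto
      then have "a * d = 1" "a * a = -1" "d * d = -1" using det \<open>a*a+b*c=-1\<close> \<open>d*d+b*c=-1\<close> by auto
      then have "a + d = 0"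
        by (metis add.inverse_inverse mult_cancel_left mult_minus_right neg_equal_iff_equal
            add.right_inverse mult_zero_left one_neq_zero)
      then show False using t' by simp
    qed
  qed
qed



lemma para_norm1:
  assumes d: "mdet f = 1" and t: "mtr f = 2" and n: "f \<noteq> mI"
  shows "\<exists>g. mdet g = 1 \<and> g \<star> f \<star> madj g = genA"
proof -
  obtain a b c e where f: "f = Mat a b c e" by (cases f)
  have det: "a * e - b * c = 1" and tr: "a + e = 2" using d t f by auto
  show ?thesis
  proof (cases "b = 0")
    case False
    define k where "k = csqrt b"
    have k2: "k * k = b" unfolding k_def by (metis power2_csqrt power2_eq_square)
    have k0: "k \<noteq> 0" using False k2 by auto
    define Q where "Q = Mat (b/k) 0 ((e - 1)/k) (1/k)"
    have dQ: "mdet Q = 1" using k0 k2 False by (simp add: Q_def field_simps)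
    have "madj Q \<star> f \<star> madj (madj Q) = genA"
    proof -
      have e2: "a = 2 - e" using tr by (simp add: algebra_simps)
      have bc: "b * c = (2 - e) * e - 1" using det e2 by (simp add: algebra_simps)
      have i1: "1/k * (a*(b/k) + b*((e-1)/k)) = 1" using k2 k0 False tr by (simp add: field_simps) (metis distrib_left mult.commute)
      have i2: "1/k * (b/k) = 1" using k2 k0 False by (simp add: field_simps)
      have i3: "(- ((e-1)/k)) * (a*(b/k) + b*((e-1)/k)) + b/k * (c*(b/k) + e*((e-1)/k)) = 0"
      proof -
        have "(- ((e-1)/k)) * (a*(b/k) + b*((e-1)/k)) + b/k * (c*(b/k) + e*((e-1)/k))
            = b * (b * c - (e - 1) * (a + e - 1) + e * (e - 1)) / (k * k)"
          using k0 by (simp add: field_simps)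
        also have "b * c - (e - 1) * (a + e - 1) + e * (e - 1) = 0"
          using bc e2 by (simp add: algebra_simps)
        finally show ?thesis by simp
      qed
      have i4: "(- ((e-1)/k)) * (b/k) + b/k * (e/k) = 1" using k2 k0 False by (simp add: field_simps)
      show ?thesis unfolding Q_def f genA_def Ap_def madj.simps mmul_assoc mmul.simps mat2.inject
        apply (intro conjI)
        using k0 k2 tr bc e2 apply (simp add: field_simps; algebra)
        using k0 k2 tr bc e2 apply (simp add: field_simps; algebra)
        using k0 det e2 apply (simp add: k2[symmetric] field_simps; algebra)
        using k0 det e2 apply (simp add: k2[symmetric] field_simps; algebra)
        done
    qed
    then show ?thesis using dQ by (metis mdet_madj)
  next
    case True
    have e2: "e = 2 - a" using tr by (simp add: algebra_simps)
    have "(a - 1)^2 = 0" using det True unfolding e2 by (simp add: power2_eq_square algebra_simps)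
    then have ae: "a = 1" "e = 1" using e2 by auto
    then have c0: "c \<noteq> 0" using n True f by (auto simp: mI_def)
    define k where "k = csqrt (-c)"
    have k2: "k * k = - c" unfolding k_def by (metis power2_csqrt power2_eq_square)
    have k0: "k \<noteq> 0" using c0 k2 by auto
    define Q where "Q = Mat 0 (1/k) (c/k) 0"
    have dQ: "mdet Q = 1" using k0 k2 c0 by (simp add: Q_def field_simps)
    have "madj Q \<star> f \<star> madj (madj Q) = genA"
      using k0 k2 c0 ae True unfolding Q_def f genA_def
      by (simp add: field_simps)
    then show ?thesis using dQ by (metis mdet_madj)
  qed
qed



lemma para_norm:
  assumes "parabolic f"
  shows "\<exists>g. mdet g = 1 \<and> psl_eq (g \<star> f \<star> madj g) genA"
proof -
  have d: "mdet f = 1" and t: "mtr f = 2 \<or> mtr f = -2" and n: "\<not> psl_eq f mI"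
    using assms by (auto simp: parabolic_def SL2_def)
  show ?thesis
  proof (cases "mtr f = 2")
    case True
    have "f \<noteq> mI" using n by auto
    then obtain g where "mdet g = 1" "g \<star> f \<star> madj g = genA" using para_norm1 d True by blast
    then show ?thesis by auto
  next
    case False
    have "mtr (mneg f) = - mtr f" by (cases f) simp
    then have t2: "mtr (mneg f) = 2" using t False by simp
    have "mneg f \<noteq> mI" using n by (auto simp: psl_eq_def) (metis mneg_mneg)
    then obtain g where g: "mdet g = 1" "g \<star> mneg f \<star> madj g = genA" using para_norm1[of "mneg f"] d t2 by auto
    then have "g \<star> f \<star> madj g = mneg genA" by (metis mneg_mmul_left mneg_mmul_right mneg_mneg)
    then show ?thesis using g by (auto simp: psl_eq_def)
  qed
qed

lemma ll_conjAp: "ll (Ap s \<star> Y \<star> Ap (-s)) = ll Y"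
  by (cases Y) (simp add: Ap_def)

lemma ll_ut: "ll \<phi> = 0 \<Longrightarrow> ll (weval genA \<phi> w) = 0"
proof (induction genA \<phi> w rule: weval.induct)
  case (1 \<phi>) then show ?case by (simp add: mI_def)
next
  case (2 \<phi> m) then show ?case by (simp add: mpowi_genA Ap_def)
next
  case (3 \<phi> m m' ms)
  then have "ll (weval genA \<phi> (m' # ms)) = 0" by simp
  then show ?case using 3(2)
    by (cases \<phi>; cases "weval genA \<phi> (m' # ms)") (simp add: mpowi_genA Ap_def)
qed

lemma Ap_genA_conj: "Ap s \<star> genA \<star> Ap (- s) = genA"
  by (simp add: genA_Ap)

lemma is_wp: "is_word_poly w (P w)"
  unfolding is_word_poly_def
proof (intro allI impI)
  fix f \<phi> assume pf: "parabolic f" and e: "elliptic2 \<phi>"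
  obtain g where g: "mdet g = 1" "psl_eq (g \<star> f \<star> madj g) genA" using para_norm pf by blast
  define f1 where "f1 = g \<star> f \<star> madj g"
  define \<phi>1 where "\<phi>1 = g \<star> \<phi> \<star> madj g"
  have df: "mdet f = 1" using pf by (simp add: parabolic_def SL2_def)
  have dp: "mdet \<phi> = 1" using e by (simp add: elliptic2_def SL2_def)
  have dp1: "mdet \<phi>1 = 1" using dp g by (simp add: \<phi>1_def)
  have tp1: "mtr \<phi>1 = 0" using ell_tr[OF e] g by (simp add: \<phi>1_def mtr_conj)
  have e1: "gam f (weval f \<phi> w) = gam f1 (weval f1 \<phi>1 w)"
    by (simp add: f1_def \<phi>1_def weval_conj[OF g(1)] gam_conj[OF g(1)])
  have e2: "gam f \<phi> = gam f1 \<phi>1"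
    by (simp add: f1_def \<phi>1_def gam_conj[OF g(1)])
  have f1c: "f1 = genA \<or> f1 = mneg genA" using g(2) by (auto simp: psl_eq_def f1_def)
  have e3: "gam f1 (weval f1 \<phi>1 w) = gam genA (weval genA \<phi>1 w)"
    using f1c
  proof
    assume "f1 = mneg genA"
    then show ?thesis using gam_psl2[OF weval_mneg] by simp
  qed simp
  have e4: "gam f1 \<phi>1 = gam genA \<phi>1" using f1c by auto
  have dA: "mdet genA = 1" by (simp add: genA_def)
  have e5: "gam genA (weval genA \<phi>1 w) = (ll (weval genA \<phi>1 w))^2"
    by (rule gam_genA[OF mdet_weval[OF dA dp1]])
  have e6: "gam genA \<phi>1 = (ll \<phi>1)^2" by (rule gam_genA[OF dp1])
  obtain a b c d where p1: "\<phi>1 = Mat a b c d" by (cases \<phi>1)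
  have da: "d = -a" using tp1 p1 by (simp add: eq_neg_iff_add_eq_0 add.commute)
  have det1: "a * d - b * c = 1" using dp1 p1 by simp
  have key: "(ll (weval genA \<phi>1 w))^2 = evi (P w) ((ll \<phi>1)^2)"
  proof (cases "c = 0")
    case True
    then show ?thesis using ll_ut[of \<phi>1 w] p1 by (simp add: P_0)
  next
    case False
    define s where "s = - a / c"
    have "Ap s \<star> \<phi>1 \<star> madj (Ap s) = phi c"
      unfolding p1 da s_def phi_def Ap_def using False det1 da
      by (simp add: field_simps)
    then have "weval genA (phi c) w = Ap s \<star> weval genA \<phi>1 w \<star> madj (Ap s)"
      using weval_conj[of "Ap s" genA \<phi>1 w] by (simp add: Ap_genA_conj)
    then have "ll (weval genA (phi c) w) = ll (weval genA \<phi>1 w)"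
      by (simp add: ll_conjAp)
    then show ?thesis using ll_weval[OF False, of w] p1 by simp
  qed
  show "gam f (weval f \<phi> w) = poly (map_poly of_int (P w)) (gam f \<phi>)"
    using e1 e2 e3 e4 e5 e6 key by (simp add: evi_def)
qed



lemma genA_parabolic: "parabolic genA"
  by (simp add: parabolic_def SL2_def genA_def psl_eq_def mI_def)

lemma phi_elliptic: "c \<noteq> 0 \<Longrightarrow> elliptic2 (phi c)"
  by (simp add: elliptic2_def SL2_def phi_def psl_eq_def mI_def)

lemma mdet_phi[simp]: "c \<noteq> 0 \<Longrightarrow> mdet (phi c) = 1"
  by (simp add: phi_def)

lemma ll_phi[simp]: "ll (phi c) = c" by (simp add: phi_def)

lemma wp_unique:
  assumes p: "is_word_poly w p" and q: "is_word_poly w q"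
  shows "p = q"
proof -
  define p' where "p' = (map_poly of_int p :: complex poly)"
  define q' where "q' = (map_poly of_int q :: complex poly)"
  have ev: "poly p' z = poly q' z" if z: "z \<noteq> 0" for z
  proof -
    define c where "c = csqrt z"
    have cz: "c^2 = z" unfolding c_def by simp
    have c0: "c \<noteq> 0" using z cz by auto
    have g: "gam genA (phi c) = z" using gam_genA[of "phi c"] c0 cz by simp
    have "gam genA (weval genA (phi c) w) = poly p' z"
      using p genA_parabolic phi_elliptic[OF c0] g unfolding is_word_poly_def p'_def by metis
    moreover have "gam genA (weval genA (phi c) w) = poly q' z"
      using q genA_parabolic phi_elliptic[OF c0] g unfolding is_word_poly_def q'_def by metis
    ultimately show ?thesis by simp
  qed
  have "p' - q' = 0"
  proof (rule ccontr)
    assume ne: "p' - q' \<noteq> 0"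
    have "{z. z \<noteq> (0::complex)} \<subseteq> {z. poly (p' - q') z = 0}" using ev by auto
    moreover have "finite {z. poly (p' - q') z = 0}" by (rule poly_roots_finite[OF ne])
    ultimately have "finite {z. z \<noteq> (0::complex)}" by (rule finite_subset)
    moreover have "infinite {z. z \<noteq> (0::complex)}"
    proof -
      have "infinite (UNIV - {0::complex})" by (simp add: infinite_UNIV_char_0)
      then show ?thesis by (simp add: Collect_neg_eq Compl_eq_Diff_UNIV)
    qed
    ultimately show False by simp
  qed
  then have "p' = q'" by simp
  then show ?thesis unfolding p'_def q'_def by (rule mp_inj)
qed

lemma word_poly_P: "word_poly w = P w"
  unfolding word_poly_def using is_wp wp_unique by blast

lemma wpoly_P: "wpoly w z = evi (P w) z"
  by (simp add: wpoly_def word_poly_P evi_def)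

lemma wpoly_ll: "c \<noteq> 0 \<Longrightarrow> wpoly w (c^2) = (ll (weval genA (phi c) w))^2"
  by (simp add: wpoly_P ll_weval)



fun red0 :: "(bool \<times> int) list \<Rightarrow> bool" where
  "red0 [] = True"
| "red0 [x] = (snd x \<noteq> 0)"
| "red0 (x # y # xs) = (snd x \<noteq> 0 \<and> fst x \<noteq> fst y \<and> red0 (y # xs))"

definition altp :: "(bool \<times> int) list \<Rightarrow> bool" where
  "altp ws \<longleftrightarrow> (\<forall>i. i + 1 < length ws \<longrightarrow> fst (ws ! i) \<noteq> fst (ws ! (i + 1)))"

lemma altp_Nil: "altp []" and altp_single: "altp [x]" by (auto simp: altp_def)

lemma altp_Cons2: "altp (x # y # xs) \<longleftrightarrow> fst x \<noteq> fst y \<and> altp (y # xs)"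
proof
  assume h: "altp (x # y # xs)"
  have "fst x \<noteq> fst y" using h[unfolded altp_def, rule_format, of 0] by simp
  moreover have "altp (y # xs)" unfolding altp_def
  proof (intro allI impI)
    fix i assume "i + 1 < length (y # xs)"
    then show "fst ((y # xs) ! i) \<noteq> fst ((y # xs) ! (i + 1))"
      using h[unfolded altp_def, rule_format, of "Suc i"] by simp
  qed
  ultimately show "fst x \<noteq> fst y \<and> altp (y # xs)" ..
next
  assume h: "fst x \<noteq> fst y \<and> altp (y # xs)"
  show "altp (x # y # xs)" unfolding altp_def
  proof (intro allI impI)
    fix i assume i: "i + 1 < length (x # y # xs)"
    show "fst ((x # y # xs) ! i) \<noteq> fst ((x # y # xs) ! (i + 1))"
    proof (cases i)
      case 0 then show ?thesis using h by simp
    next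
      case (Suc j) then show ?thesis using h i unfolding altp_def by simp
    qed
  qed
qed

lemma red0_altp: "red0 ws \<longleftrightarrow> (\<forall>x\<in>set ws. snd x \<noteq> 0) \<and> altp ws"
  by (induction ws rule: red0.induct) (auto simp: altp_Nil altp_single altp_Cons2)

lemma reduced_red0: "reduced_fword ws \<longleftrightarrow> ws \<noteq> [] \<and> red0 ws"
  by (simp add: reduced_fword_def red0_altp altp_def)

definition syl :: "complex \<Rightarrow> bool \<Rightarrow> int \<Rightarrow> mat2" where
  "syl \<delta> x e = (if x then Ap (of_int e) else genB (of_int e * \<delta>))"

lemma feval_Cons: "feval \<delta> (a # ws) = syl \<delta> (fst a) (snd a) \<star> feval \<delta> ws"
  by (cases a; cases "fst a") (simp_all add: syl_def mpowi_genA mpowi_genB)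

declare feval.simps(2)[simp del]

lemma feval_Nil[simp]: "feval \<delta> [] = mI" by simp

lemma feval_append: "feval \<delta> (xs @ ys) = feval \<delta> xs \<star> feval \<delta> ys"
  by (induction xs) (auto simp: feval_Cons mmul_assoc)

lemma feval_single: "feval \<delta> [(x, e)] = syl \<delta> x e"
  by (simp add: feval_Cons)

lemma syl_mul: "syl \<delta> x e \<star> syl \<delta> x f = syl \<delta> x (e + f)"
  by (simp add: syl_def algebra_simps)

lemma syl_mul2: "syl \<delta> x e \<star> (syl \<delta> x f \<star> z) = syl \<delta> x (e + f) \<star> z"
  by (simp add: syl_mul mmul_assoc[symmetric])

lemma syl_0[simp]: "syl \<delta> x 0 = mI" by (simp add: syl_def)
lemma mdet_syl[simp]: "mdet (syl \<delta> x e) = 1" by (simp add: syl_def)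
lemma madj_syl: "madj (syl \<delta> x e) = syl \<delta> x (-e)" by (simp add: syl_def)

lemma mdet_feval[simp]: "mdet (feval \<delta> ws) = 1"
  by (induction ws) (auto simp: feval_Cons)

definition invw :: "(bool \<times> int) list \<Rightarrow> (bool \<times> int) list" where
  "invw ws = rev (map (\<lambda>(x, e). (x, -e)) ws)"

lemma invw_Nil[simp]: "invw [] = []" by (simp add: invw_def)
lemma invw_Cons: "invw (a # ws) = invw ws @ [(fst a, - snd a)]" by (cases a) (simp add: invw_def)
lemma invw_append: "invw (xs @ ys) = invw ys @ invw xs" by (simp add: invw_def)
lemma length_invw[simp]: "length (invw ws) = length ws" by (simp add: invw_def)
lemma invw_eq_Nil[simp]: "invw ws = [] \<longleftrightarrow> ws = []" by (simp add: invw_def)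

lemma feval_invw: "feval \<delta> (invw ws) = madj (feval \<delta> ws)"
  by (induction ws) (auto simp: invw_Cons feval_append feval_Cons madj_mmul madj_syl feval_single)

lemma red0_Cons: "red0 (x # xs) \<longleftrightarrow> snd x \<noteq> 0 \<and> (xs \<noteq> [] \<longrightarrow> fst x \<noteq> fst (hd xs)) \<and> red0 xs"
  by (cases xs) auto

lemma red0_append:
  "red0 xs \<Longrightarrow> red0 ys \<Longrightarrow> (xs \<noteq> [] \<Longrightarrow> ys \<noteq> [] \<Longrightarrow> fst (last xs) \<noteq> fst (hd ys)) \<Longrightarrow> red0 (xs @ ys)"
proof (induction xs)
  case Nil then show ?case by simp
next
  case (Cons a xs)
  have r: "red0 xs" "snd a \<noteq> 0" and h: "xs \<noteq> [] \<Longrightarrow> fst a \<noteq> fst (hd xs)"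
    using Cons(2) by (auto simp: red0_Cons)
  show ?case
  proof (cases "xs = []")
    case True
    have "ys \<noteq> [] \<Longrightarrow> fst a \<noteq> fst (hd ys)" using Cons(4) True by simp
    then show ?thesis using True r(2) Cons(3) by (simp add: red0_Cons)
  next
    case False
    have c: "ys \<noteq> [] \<Longrightarrow> fst (last xs) \<noteq> fst (hd ys)" using Cons(4) False by simp
    have "red0 (xs @ ys)" using Cons.IH[OF r(1) Cons(3) c] .
    moreover have "fst a \<noteq> fst (hd (xs @ ys))" using h False by simp
    ultimately show ?thesis using r(2) by (simp add: red0_Cons)
  qed
qed

lemma red0_snoc: "red0 (xs @ [x]) \<longleftrightarrow> red0 xs \<and> snd x \<noteq> 0 \<and> (xs \<noteq> [] \<longrightarrow> fst (last xs) \<noteq> fst x)"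
  by (induction xs rule: red0.induct) (auto simp: red0_Cons)

lemma hd_invw: "ws \<noteq> [] \<Longrightarrow> fst (hd (invw ws)) = fst (last ws)"
  by (simp add: invw_def hd_rev last_map split: prod.splits)
lemma last_invw: "ws \<noteq> [] \<Longrightarrow> fst (last (invw ws)) = fst (hd ws)"
  by (cases ws) (auto simp: invw_def last_rev split: prod.splits)

lemma red0_invw: "red0 ws \<Longrightarrow> red0 (invw ws)"
proof (induction ws)
  case Nil then show ?case by simp
next
  case (Cons a ws)
  then show ?case by (auto simp: invw_Cons red0_snoc red0_Cons last_invw)
qed

lemma free_nontriv:
  "Gamma_free \<delta> \<Longrightarrow> red0 ws \<Longrightarrow> ws \<noteq> [] \<Longrightarrow> \<not> psl_eq (feval \<delta> ws) mI"
  unfolding Gamma_free_def reduced_red0 by blast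

lemma psl_cancel: "mdet S = 1 \<Longrightarrow> psl_eq (S \<star> a) (S \<star> b) \<Longrightarrow> psl_eq a b"
proof -
  assume d: "mdet S = 1" and h: "psl_eq (S \<star> a) (S \<star> b)"
  have "psl_eq (madj S \<star> (S \<star> a)) (madj S \<star> (S \<star> b))" using psl_eq_mmul[OF psl_eq_refl h] .
  then show ?thesis using d by (simp add: cancel1)
qed

lemma psl_eq_to_I: "psl_eq a b \<Longrightarrow> mdet b = 1 \<Longrightarrow> psl_eq (madj b \<star> a) mI"
proof -
  assume h: "psl_eq a b" and d: "mdet b = 1"
  have "psl_eq (madj b \<star> a) (madj b \<star> b)" using psl_eq_mmul[OF psl_eq_refl h] .
  then show ?thesis using d by (simp add: madj_mmul_self)
qed

lemma uniq:
  assumes fr: "Gamma_free \<delta>"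
  shows "red0 u \<Longrightarrow> red0 v \<Longrightarrow> psl_eq (feval \<delta> u) (feval \<delta> v) \<Longrightarrow> u = v"
proof (induction u arbitrary: v)
  case Nil
  show ?case
  proof (rule ccontr)
    assume "[] \<noteq> v"
    then show False using free_nontriv[OF fr Nil(2)] Nil(3) by (auto intro: psl_eq_sym)
  qed
next
  case (Cons a u')
  obtain x e where a: "a = (x, e)" by (cases a)
  show ?case
  proof (cases "v = []")
    case True
    then show ?thesis using free_nontriv[OF fr Cons(2)] Cons(4) by auto
  next
    case False
    then obtain b v' where Cons2: "v = b # v'" by (cases v) auto
    obtain y f where b: "b = (y, f)" by (cases b)
    have ru: "red0 ((x,e) # u')" and rv: "red0 ((y,f) # v')" using Cons a b Cons2 by auto
    have E: "psl_eq (feval \<delta> (invw v @ (x, e) # u')) mI"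
      using psl_eq_to_I[OF Cons(4)] by (simp add: feval_append feval_invw a)
    show ?thesis
    proof (cases "x = y")
      case False
      have "red0 (invw v @ (x, e) # u')"
        by (rule red0_append) (use ru rv Cons2 b False in \<open>auto simp: red0_invw last_invw\<close>)
      then have False using free_nontriv[OF fr, of "invw v @ (x, e) # u'"] E by simp
      then show ?thesis ..
    next
      case True
      show ?thesis
      proof (cases "e = f")
        case False
        have w: "feval \<delta> (invw v' @ (x, e - f) # u') = feval \<delta> (invw v @ (x, e) # u')"
          using True b Cons2
          by (simp add: invw_Cons feval_append feval_Cons feval_single mmul_assoc syl_mul2)
        have rv': "red0 v'" and ne: "v' \<noteq> [] \<Longrightarrow> fst (hd v') \<noteq> y" using rv by (auto simp: red0_Cons)
        have "red0 (invw v' @ (x, e - f) # u')"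
          by (rule red0_append) (use ru rv' ne False True in \<open>auto simp: red0_invw last_invw red0_Cons\<close>)
        then have False using free_nontriv[OF fr, of "invw v' @ (x, e - f) # u'"] E w by simp
        then show ?thesis ..
      next
        case True2: True
        have "psl_eq (syl \<delta> x e \<star> feval \<delta> u') (syl \<delta> x e \<star> feval \<delta> v')"
          using Cons(4) a b Cons2 True True2 by (simp add: feval_Cons)
        then have "psl_eq (feval \<delta> u') (feval \<delta> v')" by (rule psl_cancel[rotated]) simp
        moreover have "red0 u'" "red0 v'" using ru rv by (auto simp: red0_Cons)
        ultimately have "u' = v'" using Cons.IH by blast
        then show ?thesis using a b Cons2 True True2 by simp
      qed
    qed
  qed
qed



lemma red0_appendD: "red0 (xs @ ys) \<Longrightarrow> red0 xs \<and> red0 ys"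
proof (induction xs)
  case Nil then show ?case by simp
next
  case (Cons a xs)
  have r: "red0 (xs @ ys)" "snd a \<noteq> 0" and h: "xs @ ys \<noteq> [] \<Longrightarrow> fst a \<noteq> fst (hd (xs @ ys))"
    using Cons(2) by (simp_all add: red0_Cons)
  have "red0 xs" "red0 ys" using Cons.IH[OF r(1)] by simp_all
  moreover have "xs \<noteq> [] \<Longrightarrow> fst a \<noteq> fst (hd xs)" using h by simp
  ultimately show ?case using r(2) by (simp add: red0_Cons)
qed

lemma syl_nontriv: "\<delta> \<noteq> 0 \<Longrightarrow> e \<noteq> 0 \<Longrightarrow> \<not> psl_eq (syl \<delta> x e) mI"
  by (cases x) (auto simp: syl_def psl_eq_def Ap_def genB_def mI_def)

lemma rot_I: "psl_eq (X \<star> Y) mI \<Longrightarrow> mdet X = 1 \<Longrightarrow> psl_eq (Y \<star> X) mI"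
proof -
  assume h: "psl_eq (X \<star> Y) mI" and d: "mdet X = 1"
  have "psl_eq (madj X \<star> (X \<star> Y) \<star> X) (madj X \<star> mI \<star> X)"
    using psl_eq_mmul[OF psl_eq_mmul[OF psl_eq_refl h] psl_eq_refl] .
  then show ?thesis using d by (simp add: mmul_assoc cancel1 madj_mmul_self)
qed

lemma cyc_red:
  assumes d0: "\<delta> \<noteq> 0"
  shows "red0 ws \<Longrightarrow> ws \<noteq> [] \<Longrightarrow> psl_eq (feval \<delta> ws) mI \<Longrightarrow>
    \<exists>ws'. red0 ws' \<and> ws' \<noteq> [] \<and> psl_eq (feval \<delta> ws') mI \<and> fst (hd ws') = False \<and> fst (last ws') = True"
proof (induction "length ws" arbitrary: ws rule: less_induct)
  case less
  obtain a rest where ws: "ws = a # rest" using less(3) by (cases ws) auto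
  have ra: "snd a \<noteq> 0" and rr: "red0 rest" and hr: "rest \<noteq> [] \<Longrightarrow> fst a \<noteq> fst (hd rest)"
    using less(2) ws by (simp_all add: red0_Cons)
  have rest_ne: "rest \<noteq> []"
  proof
    assume "rest = []"
    then have "psl_eq (syl \<delta> (fst a) (snd a)) mI" using less(4) ws by (simp add: feval_Cons)
    then show False using syl_nontriv[OF d0 ra] by simp
  qed
  show ?case
  proof (cases "fst a = fst (last ws)")
    case False
    show ?thesis
    proof (cases "fst a")
      case False2: False
      then show ?thesis using less(2,3,4) False ws by (metis list.sel(1))
    next
      case True
      define ws' where "ws' = rest @ [a]"
      have lw: "last ws = last rest" using ws rest_ne by simp
      have "red0 ws'" unfolding ws'_def
        by (rule red0_append) (use rr ra False lw in auto)
      moreover have "psl_eq (feval \<delta> ws') mI"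
        using rot_I[of "syl \<delta> (fst a) (snd a)" "feval \<delta> rest"] less(4) ws
        by (simp add: ws'_def feval_append feval_single feval_Cons)
      moreover have "fst (hd ws') = False" using hr rest_ne True by (simp add: ws'_def)
      moreover have "fst (last ws') = True" using True by (simp add: ws'_def)
      ultimately show ?thesis by (auto simp: ws'_def)
    qed
  next
    case True
    obtain mid b where rb: "rest = mid @ [b]" using rest_ne by (metis append_butlast_last_id)
    have fb: "fst b = fst a" using True ws rb by simp
    have mid_ne: "mid \<noteq> []"
    proof
      assume "mid = []"
      then show False using hr rb fb by simp
    qed
    have rm: "red0 mid" and rb': "snd b \<noteq> 0" and lm: "fst (last mid) \<noteq> fst b"
      using rr rb mid_ne by (simp_all add: red0_snoc)
    have E: "psl_eq (syl \<delta> (fst a) (snd a) \<star> (feval \<delta> mid \<star> syl \<delta> (fst a) (snd b))) mI"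
      using less(4) ws rb fb by (simp add: feval_Cons feval_append feval_single)
    have E2: "psl_eq (feval \<delta> mid \<star> syl \<delta> (fst a) (snd b + snd a)) mI"
      using rot_I[OF E] by (simp add: mmul_assoc syl_mul)
    show ?thesis
    proof (cases "snd b + snd a = 0")
      case True
      have "psl_eq (feval \<delta> mid) mI" using E2 True by simp
      moreover have "length mid < length ws" using ws rb by simp
      ultimately show ?thesis using less(1) rm mid_ne by blast
    next
      case False
      define ws' where "ws' = mid @ [(fst a, snd b + snd a)]"
      have "red0 ws'" unfolding ws'_def using rm False lm fb by (simp add: red0_snoc)
      moreover have "psl_eq (feval \<delta> ws') mI" using E2 by (simp add: ws'_def feval_append feval_single)
      moreover have "length ws' < length ws" using ws rb by (simp add: ws'_def)
      ultimately show ?thesis using less(1)[of ws'] by (auto simp: ws'_def)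
    qed
  qed
qed



definition pw :: "(int \<times> int) list \<Rightarrow> (bool \<times> int) list" where
  "pw ps = concat (map (\<lambda>(f, e). [(False, f), (True, e)]) ps)"

lemma pw_Nil[simp]: "pw [] = []" and pw_Cons: "pw ((f, e) # ps) = (False, f) # (True, e) # pw ps"
  by (simp_all add: pw_def)

lemma extract_pairs:
  "red0 ws \<Longrightarrow> ws \<noteq> [] \<Longrightarrow> fst (hd ws) = False \<Longrightarrow> fst (last ws) = True \<Longrightarrow>
   \<exists>ps. ps \<noteq> [] \<and> ws = pw ps \<and> (\<forall>p\<in>set ps. fst p \<noteq> 0 \<and> snd p \<noteq> 0)"
proof (induction "length ws" arbitrary: ws rule: less_induct)
  case less
  obtain a rest where ws: "ws = a # rest" using less(3) by (cases ws) auto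
  have rest_ne: "rest \<noteq> []" using less(4,5) ws by auto
  obtain b rest2 where r: "rest = b # rest2" using rest_ne by (cases rest) auto
  obtain ea where a: "a = (False, ea)" using less(4) ws by (cases a) auto
  have fb: "fst b = True" and sa: "ea \<noteq> 0" and sb: "snd b \<noteq> 0" and r2: "red0 rest2"
    and h2: "rest2 \<noteq> [] \<Longrightarrow> fst (hd rest2) = False"
    using less(2) ws r a by (auto simp: red0_Cons)
  obtain eb where b: "b = (True, eb)" using fb by (cases b) auto
  show ?case
  proof (cases "rest2 = []")
    case True
    then show ?thesis using ws r a b sa sb
      by (intro exI[of _ "[(ea, eb)]"]) (simp add: pw_Cons)
  next
    case False
    have l2: "fst (last rest2) = True" using less(5) ws r False by simp
    obtain ps where ps: "ps \<noteq> []" "rest2 = pw ps" "\<forall>p\<in>set ps. fst p \<noteq> 0 \<and> snd p \<noteq> 0"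
      using less(1)[of rest2] ws r r2 False h2 l2 by auto
    show ?thesis using ws r a b sa sb ps
      by (intro exI[of _ "(ea, eb) # ps"]) (simp add: pw_Cons)
  qed
qed

definition gw :: "(int \<times> int) list \<Rightarrow> int list" where
  "gw ps = 0 # concat (map (\<lambda>(f, e). [-f, e]) ps) @ [0]"

lemma gw_good: "ps \<noteq> [] \<Longrightarrow> \<forall>p\<in>set ps. fst p \<noteq> 0 \<and> snd p \<noteq> 0 \<Longrightarrow> good_word (gw ps)"
proof -
  assume ne: "ps \<noteq> []" and nz: "\<forall>p\<in>set ps. fst p \<noteq> 0 \<and> snd p \<noteq> 0"
  define L where "L = concat (map (\<lambda>(f, e). [-f, e]) ps)"
  have lenL: "length L = 2 * length ps" unfolding L_def
    by (induction ps) auto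
  have nzL: "\<forall>x\<in>set L. x \<noteq> 0" using nz unfolding L_def by auto
  have len: "length (gw ps) = length L + 2" by (simp add: gw_def L_def)
  show ?thesis unfolding good_word_def
  proof (intro conjI allI impI)
    show "3 \<le> length (gw ps)" using len lenL ne by (cases ps) auto
  next
    fix i assume i: "1 \<le> i \<and> i < length (gw ps) - 1"
    have il: "i - 1 < length L" using i len by linarith
    have "gw ps ! i = L ! (i - 1)"
      using i il by (simp add: gw_def L_def[symmetric] nth_append nth_Cons')
    then show "gw ps ! i \<noteq> 0" using nzL il by (simp add: nth_mem)
  qed
qed

lemma weval_Cons2: "rest \<noteq> [] \<Longrightarrow> weval f \<phi> (m # rest) = mpowi f m \<star> (\<phi> \<star> weval f \<phi> rest)"
  by (cases rest) auto

lemma madj_phi: "c \<noteq> 0 \<Longrightarrow> madj (phi c) = mneg (phi c)"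
  by (simp add: phi_def)

lemma phi_Ap_phi: "c \<noteq> 0 \<Longrightarrow> phi c \<star> (Ap (- of_int f) \<star> (phi c \<star> Z)) = mneg (genB (of_int f * c^2) \<star> Z)"
proof -
  assume c: "c \<noteq> 0"
  have "phi c \<star> Ap (- of_int f) \<star> phi c = mneg (genB (of_int f * c^2))"
    using c by (simp add: phi_def Ap_def genB_def field_simps power2_eq_square)
  then show ?thesis by (metis mmul_assoc mneg_mmul_left)
qed

lemma weval_gw:
  assumes c: "c \<noteq> 0"
  shows "psl_eq (weval genA (phi c) (gw ps)) (feval (c^2) (pw ps) \<star> phi c)"
proof (induction ps)
  case Nil
  then show ?case by (simp add: gw_def mpowi_genA)
next
  case (Cons p ps)
  obtain f e where p: "p = (f, e)" by (cases p)
  define T where "T = concat (map (\<lambda>(f, e). [-f, e]) ps) @ [0]"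
  have T: "T \<noteq> []" by (simp add: T_def)
  have g1: "gw (p # ps) = 0 # (-f) # e # T" by (simp add: gw_def T_def p)
  have g2: "gw ps = 0 # T" by (simp add: gw_def T_def)
  have "weval genA (phi c) (gw (p # ps)) =
        phi c \<star> (Ap (- of_int f) \<star> (phi c \<star> (Ap (of_int e) \<star> (phi c \<star> weval genA (phi c) T))))"
    using T by (simp add: g1 weval_Cons2 mpowi_genA)
  also have "\<dots> = mneg (genB (of_int f * c^2) \<star> (Ap (of_int e) \<star> weval genA (phi c) (gw ps)))"
    using T c by (simp add: phi_Ap_phi g2 weval_Cons2 mpowi_genA)
  finally have "psl_eq (weval genA (phi c) (gw (p # ps)))
       (genB (of_int f * c^2) \<star> Ap (of_int e) \<star> weval genA (phi c) (gw ps))"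
    by (simp add: mmul_assoc)
  moreover have "psl_eq (genB (of_int f * c^2) \<star> Ap (of_int e) \<star> weval genA (phi c) (gw ps))
     (genB (of_int f * c^2) \<star> Ap (of_int e) \<star> (feval (c^2) (pw ps) \<star> phi c))"
    using psl_eq_mmul[OF psl_eq_refl Cons.IH] .
  ultimately show ?case
    by (simp add: p pw_Cons feval_Cons syl_def mmul_assoc psl_eq_trans)
qed



lemma forward:
  assumes g0: "\<gamma> \<noteq> 0" and nf: "\<not> Gamma_free \<gamma>"
  shows "\<exists>w. good_word w \<and> wpoly w \<gamma> = \<gamma>"
proof -
  obtain ws where ws: "reduced_fword ws" "psl_eq (feval \<gamma> ws) mI" using nf by (auto simp: Gamma_free_def)
  obtain ws' where ws': "red0 ws'" "ws' \<noteq> []" "psl_eq (feval \<gamma> ws') mI" "fst (hd ws') = False" "fst (last ws') = True"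
    using cyc_red[OF g0, of ws] ws by (auto simp: reduced_red0)
  obtain ps where ps: "ps \<noteq> []" "ws' = pw ps" "\<forall>p\<in>set ps. fst p \<noteq> 0 \<and> snd p \<noteq> 0"
    using extract_pairs[OF ws'(1,2,4,5)] by blast
  define c where "c = csqrt \<gamma>"
  have c2: "c^2 = \<gamma>" by (simp add: c_def)
  have c0: "c \<noteq> 0" using g0 c2 by auto
  have "psl_eq (weval genA (phi c) (gw ps)) (feval (c^2) (pw ps) \<star> phi c)" by (rule weval_gw[OF c0])
  moreover have "psl_eq (feval (c^2) (pw ps) \<star> phi c) (mI \<star> phi c)"
  proof -
    have "psl_eq (feval (c^2) (pw ps)) mI" using ws'(3) ps(2) c2 by simp
    then show ?thesis using psl_eq_mmul[OF _ psl_eq_refl[of "phi c"]] by blast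
  qed
  ultimately have "psl_eq (weval genA (phi c) (gw ps)) (phi c)" using psl_eq_trans by simp
  then have "(ll (weval genA (phi c) (gw ps)))^2 = c^2"
    by (cases "weval genA (phi c) (gw ps)") (auto simp: psl_eq_def phi_def)
  then have "wpoly (gw ps) \<gamma> = \<gamma>" using wpoly_ll[OF c0, of "gw ps"] c2 by simp
  then show ?thesis using gw_good[OF ps(1,3)] by blast
qed

fun sig :: "bool \<times> int \<Rightarrow> bool \<times> int" where "sig (x, e) = (\<not> x, - e)"
definition sigw :: "(bool \<times> int) list \<Rightarrow> (bool \<times> int) list" where "sigw = map sig"

lemma sigw_simps[simp]: "sigw [] = []" "sigw (a # l) = sig a # sigw l" "sigw (l @ l') = sigw l @ sigw l'"
  by (simp_all add: sigw_def)

lemma fst_sig[simp]: "fst (sig a) = (\<not> fst a)" and snd_sig[simp]: "snd (sig a) = - snd a"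
  by (cases a; simp)+

lemma invw_sigw: "invw (sigw l) = sigw (invw l)"
  by (induction l) (auto simp: invw_Cons)

lemma phi_syl: "c \<noteq> 0 \<Longrightarrow> phi c \<star> syl (c^2) x e \<star> madj (phi c) = syl (c^2) (\<not> x) (- e)"
  by (cases x) (simp_all add: syl_def phi_def Ap_def genB_def field_simps power2_eq_square)

lemma conj_phi: "c \<noteq> 0 \<Longrightarrow> phi c \<star> feval (c^2) ws \<star> madj (phi c) = feval (c^2) (sigw ws)"
proof (induction ws)
  case Nil then show ?case by (simp add: mmul_madj)
next
  case (Cons a ws)
  have "phi c \<star> feval (c^2) (a # ws) \<star> madj (phi c) =
     (phi c \<star> syl (c^2) (fst a) (snd a) \<star> madj (phi c)) \<star> (phi c \<star> feval (c^2) ws \<star> madj (phi c))"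
    using Cons.prems by (simp add: feval_Cons conj_mul)
  also have "\<dots> = feval (c^2) (sigw (a # ws))"
    using Cons by (simp add: phi_syl feval_Cons)
  finally show ?case .
qed

fun hh :: "int list \<Rightarrow> (bool \<times> int) list" where
  "hh [] = []"
| "hh (m # ms) = sigw ((True, m) # hh ms)"

fun ss :: "int list \<Rightarrow> bool \<times> int" where
  "ss [] = (False, 1)"
| "ss (m # ms) = sig (ss ms)"

definition core :: "int list \<Rightarrow> (bool \<times> int) list" where
  "core ms = hh ms @ [ss ms] @ invw (hh ms)"

definition V :: "complex \<Rightarrow> int list \<Rightarrow> mat2" where
  "V c ms = weval genA (phi c) (0 # ms @ [0])"

lemma V_Nil: "V c [] = phi c" by (simp add: V_def mpowi_genA)
lemma V_Cons: "V c (m # ms) = phi c \<star> (Ap (of_int m) \<star> V c ms)"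
  by (cases ms) (simp_all add: V_def mpowi_genA weval_Cons2)

lemma mdet_V: "c \<noteq> 0 \<Longrightarrow> mdet (V c ms) = 1"
  by (induction ms) (simp_all add: V_Nil V_Cons)

lemma core_eq: "c \<noteq> 0 \<Longrightarrow> feval (c^2) (core ms) = V c ms \<star> Ap (-1) \<star> madj (V c ms)"
proof (induction ms)
  case Nil
  have "phi c \<star> syl (c^2) True (-1) \<star> madj (phi c) = syl (c^2) False 1"
    using phi_syl[OF Nil, of True "-1"] by simp
  then show ?case by (simp add: core_def V_Nil feval_single syl_def)
next
  case (Cons m ms)
  have "core (m # ms) = sigw ([(True, m)] @ core ms @ [(True, - m)])"
    by (simp add: core_def invw_sigw invw_Cons)
  then have "feval (c^2) (core (m # ms)) = feval (c^2) (sigw ([(True, m)] @ core ms @ [(True, - m)]))"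
    by (simp only:)
  also have "\<dots> = phi c \<star> feval (c^2) ([(True, m)] @ core ms @ [(True, - m)]) \<star> madj (phi c)"
    by (rule conj_phi[OF Cons.prems, symmetric])
  also have "\<dots> = phi c \<star> (Ap (of_int m) \<star> feval (c^2) (core ms) \<star> Ap (- of_int m)) \<star> madj (phi c)"
    by (simp only: feval_append feval_single syl_def if_True of_int_minus mmul_assoc)
  also have "\<dots> = V c (m # ms) \<star> Ap (-1) \<star> madj (V c (m # ms))"
    using Cons by (simp add: V_Cons madj_mmul mmul_assoc)
  finally show ?case .
qed



lemma red0_sigw: "red0 (sigw l) = red0 l"
  by (induction l rule: red0.induct) auto

lemma sigw_Nil_iff[simp]: "sigw l = [] \<longleftrightarrow> l = []" by (simp add: sigw_def)

lemma last_sigw: "l \<noteq> [] \<Longrightarrow> last (sigw l) = sig (last l)"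
  by (simp add: sigw_def last_map)

lemma hh_ne: "ms \<noteq> [] \<Longrightarrow> hh ms \<noteq> []"
  by (cases ms) auto

lemma hh_props:
  "(\<forall>x\<in>set ms. x \<noteq> 0) \<Longrightarrow> red0 (hh ms) \<and>
     (ms \<noteq> [] \<longrightarrow> fst (hd (hh ms)) = False \<and> fst (last (hh ms)) \<noteq> fst (ss ms)) \<and>
     (snd (ss ms) = 1 \<or> snd (ss ms) = -1)"
proof (induction ms)
  case Nil then show ?case by simp
next
  case (Cons m ms)
  then have IH: "red0 (hh ms)" "ms \<noteq> [] \<Longrightarrow> fst (hd (hh ms)) = False \<and> fst (last (hh ms)) \<noteq> fst (ss ms)"
    "snd (ss ms) = 1 \<or> snd (ss ms) = -1" and m: "m \<noteq> 0" by auto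
  have r: "red0 ((True, m) # hh ms)"
    using IH m hh_ne[of ms] by (cases "ms = []") (auto simp: red0_Cons)
  have l: "fst (last (hh (m # ms))) \<noteq> fst (ss (m # ms))"
  proof (cases "ms = []")
    case True then show ?thesis by simp
  next
    case False
    then show ?thesis using IH(2) hh_ne[OF False] by (simp add: last_sigw)
  qed
  have r': "red0 (hh (m # ms))" using r red0_sigw[of "(True, m) # hh ms"] by (simp only: hh.simps)
  show ?case using r' l IH(3) by auto
qed

definition evs :: "int list \<Rightarrow> bool \<times> int \<Rightarrow> (bool \<times> int) list" where
  "evs ms a = (if fst a then [a] else hh ms @ [(fst (ss ms), snd (ss ms) * snd a)] @ invw (hh ms))"

definition E :: "int list \<Rightarrow> (bool \<times> int) list \<Rightarrow> (bool \<times> int) list" where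
  "E ms v = concat (map (evs ms) v)"

lemma E_Nil[simp]: "E ms [] = []" and E_Cons: "E ms (a # v) = evs ms a @ E ms v"
  by (simp_all add: E_def)

locale midw =
  fixes ms :: "int list"
  assumes ne: "ms \<noteq> []" and nz: "\<forall>x\<in>set ms. x \<noteq> 0"
begin

lemma hp: "red0 (hh ms)" "hh ms \<noteq> []" "fst (hd (hh ms)) = False" "fst (last (hh ms)) \<noteq> fst (ss ms)"
  "snd (ss ms) = 1 \<or> snd (ss ms) = -1"
  using hh_props[OF nz] ne hh_ne[OF ne] by auto

lemma evs_ne: "evs ms a \<noteq> []" by (simp add: evs_def)

lemma evs_hd: "fst (hd (evs ms a)) = fst a"
  using hp by (auto simp: evs_def)

lemma evs_last: "fst (last (evs ms a)) = fst a"
  using hp by (auto simp: evs_def last_invw)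

lemma evs_len: "\<not> fst a \<Longrightarrow> length (evs ms a) \<ge> 3"
proof -
  assume "\<not> fst a"
  moreover have "length (hh ms) \<ge> 1" using hp(2) by (cases "hh ms") auto
  ultimately show ?thesis by (simp add: evs_def)
qed

lemma red0_evs: "snd a \<noteq> 0 \<Longrightarrow> red0 (evs ms a)"
proof (cases "fst a")
  case True then show "snd a \<noteq> 0 \<Longrightarrow> red0 (evs ms a)" by (simp add: evs_def)
next
  case False
  assume a0: "snd a \<noteq> 0"
  have s0: "snd (ss ms) * snd a \<noteq> 0" using hp(5) a0 by auto
  have r2: "red0 ([(fst (ss ms), snd (ss ms) * snd a)] @ invw (hh ms))"
    using s0 red0_invw[OF hp(1)] hd_invw[OF hp(2)] hp(4) by (simp add: red0_Cons)
  have "red0 (hh ms @ [(fst (ss ms), snd (ss ms) * snd a)] @ invw (hh ms))"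
    by (rule red0_append[OF hp(1) r2]) (use hp(4) in simp)
  then show ?thesis using False by (simp add: evs_def)
qed

lemma E_hd: "v \<noteq> [] \<Longrightarrow> fst (hd (E ms v)) = fst (hd v)"
  by (cases v) (simp_all add: E_Cons evs_ne evs_hd)

lemma E_ne: "E ms v = [] \<longleftrightarrow> v = []"
  by (cases v) (simp_all add: E_Cons evs_ne)

lemma red0_E: "red0 v \<Longrightarrow> red0 (E ms v)"
proof (induction v)
  case Nil then show ?case by simp
next
  case (Cons a v)
  have r: "snd a \<noteq> 0" "red0 v" and h: "v \<noteq> [] \<Longrightarrow> fst a \<noteq> fst (hd v)"
    using Cons.prems by (simp_all add: red0_Cons)
  show ?case unfolding E_Cons
    by (rule red0_append[OF red0_evs[OF r(1)] Cons.IH[OF r(2)]])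
       (use h in \<open>simp add: evs_last E_hd E_ne\<close>)
qed

lemma E_not_B: "E ms v \<noteq> [(False, 1)]"
proof (cases v)
  case Nil then show ?thesis by simp
next
  case (Cons a v')
  show ?thesis
  proof (cases "fst a")
    case True
    then show ?thesis using Cons by (cases a) (simp add: E_Cons evs_def)
  next
    case False
    then have "length (E ms v) \<ge> 3" using evs_len[of a] Cons by (simp add: E_Cons)
    then show ?thesis by auto
  qed
qed

end

definition psi :: "complex \<Rightarrow> mat2 \<Rightarrow> mat2" where
  "psi t M = Ap t \<star> M \<star> Ap (- t)"

lemma psi_mul: "psi t (X \<star> Y) = psi t X \<star> psi t Y"
  by (simp add: psi_def mmul_assoc cancel1[of "Ap t", simplified])

lemma psi_psi: "psi a (psi b M) = psi (a + b) M"
  by (simp add: psi_def mmul_assoc[symmetric]) (simp add: mmul_assoc algebra_simps)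

lemma psi_0[simp]: "psi 0 M = M" by (simp add: psi_def)
lemma psi_I[simp]: "psi t mI = mI" by (simp add: psi_def)
lemma psi_mneg[simp]: "psi t (mneg M) = mneg (psi t M)" by (simp add: psi_def)

lemma mpowi_syl: "mpowi (syl \<delta> x e) f = syl \<delta> x (f * e)"
  by (simp add: syl_def mpowi_Ap mpowi_genB algebra_simps)

lemma psi_E:
  assumes m: "midw ms" and t: "psi t (genB \<delta>1) = feval \<delta> (core ms)"
  shows "psi t (feval \<delta>1 v) = feval \<delta> (E ms v)"
proof (induction v)
  case Nil then show ?case by simp
next
  case (Cons a v)
  have s: "psi t (syl \<delta>1 (fst a) (snd a)) = feval \<delta> (evs ms a)"
  proof (cases "fst a")
    case True
    then show ?thesis by (cases a) (simp add: psi_def syl_def evs_def feval_single)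
  next
    case False
    have "psi t (syl \<delta>1 (fst a) (snd a)) = psi t (mpowi (genB \<delta>1) (snd a))"
      using False by (simp add: syl_def mpowi_genB)
    also have "\<dots> = mpowi (psi t (genB \<delta>1)) (snd a)"
      using mpowi_conj[of "Ap t" "genB \<delta>1" "snd a"] by (simp add: psi_def)
    also have "\<dots> = mpowi (feval \<delta> (hh ms) \<star> syl \<delta> (fst (ss ms)) (snd (ss ms)) \<star> madj (feval \<delta> (hh ms))) (snd a)"
      using t by (simp add: core_def feval_append feval_Cons feval_invw mmul_assoc)
    also have "\<dots> = feval \<delta> (hh ms) \<star> syl \<delta> (fst (ss ms)) (snd a * snd (ss ms)) \<star> madj (feval \<delta> (hh ms))"
      by (simp add: mpowi_conj mpowi_syl)
    also have "\<dots> = feval \<delta> (evs ms a)"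
      using False by (simp add: evs_def feval_append feval_Cons feval_invw mmul_assoc mult.commute)
    finally show ?thesis .
  qed
  show ?case using Cons s by (simp add: feval_Cons E_Cons feval_append psi_mul)
qed



lemma normalize_word: "\<exists>v'. red0 v' \<and> feval \<delta> v' = feval \<delta> v"
proof (induction v)
  case Nil then show ?case by (intro exI[of _ "[]"]) simp
next
  case (Cons a v)
  then obtain v' where v': "red0 v'" "feval \<delta> v' = feval \<delta> v" by blast
  show ?case
  proof (cases "snd a = 0")
    case True
    then show ?thesis using v' by (intro exI[of _ v']) (simp add: feval_Cons)
  next
    case a0: False
    show ?thesis
    proof (cases "v' \<noteq> [] \<and> fst (hd v') = fst a")
      case False
      then have "red0 (a # v')" using v'(1) a0 by (auto simp: red0_Cons)
      then show ?thesis using v' by (intro exI[of _ "a # v'"]) (simp add: feval_Cons)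
    next
      case True
      then obtain b v'' where b: "v' = b # v''" "fst b = fst a" by (cases v') auto
      have rb: "red0 v''" "v'' \<noteq> [] \<Longrightarrow> fst b \<noteq> fst (hd v'')" using v'(1) b by (simp_all add: red0_Cons)
      have fe: "feval \<delta> (a # v) = syl \<delta> (fst a) (snd a + snd b) \<star> feval \<delta> v''"
        using v'(2)[symmetric] b by (simp add: feval_Cons syl_mul2)
      show ?thesis
      proof (cases "snd a + snd b = 0")
        case True
        then show ?thesis using fe rb by (intro exI[of _ v'']) simp
      next
        case False
        have "red0 ((fst a, snd a + snd b) # v'')" using rb False b(2) by (auto simp: red0_Cons)
        then show ?thesis using fe by (intro exI[of _ "(fst a, snd a + snd b) # v''"]) (simp add: feval_Cons)
      qed
    qed
  qed
qed

definition inH :: "complex \<Rightarrow> mat2 \<Rightarrow> bool" where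
  "inH \<delta> M \<longleftrightarrow> (\<exists>v. feval \<delta> v = M)"

lemma inH_red: "inH \<delta> M \<Longrightarrow> \<exists>v. red0 v \<and> feval \<delta> v = M"
proof -
  assume "inH \<delta> M"
  then obtain v where v: "feval \<delta> v = M" by (auto simp: inH_def)
  obtain v' where "red0 v'" "feval \<delta> v' = feval \<delta> v" using normalize_word by blast
  then show ?thesis using v by blast
qed

fun iota :: "mat2 \<Rightarrow> mat2" where "iota (Mat a b c d) = Mat d b c a"

lemma iota_mul: "iota (X \<star> Y) = iota Y \<star> iota X"
  by (cases X; cases Y) (simp add: algebra_simps)
lemma iota_iota[simp]: "iota (iota X) = X" by (cases X) simp
lemma iota_Ap[simp]: "iota (Ap t) = Ap t" by (simp add: Ap_def)
lemma iota_syl[simp]: "iota (syl \<delta> x e) = syl \<delta> x e" by (simp add: syl_def Ap_def genB_def)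
lemma iota_I[simp]: "iota mI = mI" by (simp add: mI_def)
lemma iota_feval: "iota (feval \<delta> v) = feval \<delta> (rev v)"
  by (induction v) (simp_all add: feval_Cons feval_append iota_mul feval_single)

lemma inH_iota: "inH \<delta> M \<Longrightarrow> inH \<delta> (iota M)"
proof -
  assume "inH \<delta> M"
  then obtain v where v: "feval \<delta> v = M" by (auto simp: inH_def)
  then have "feval \<delta> (rev v) = iota M" using iota_feval[of \<delta> v] by simp
  then show ?thesis by (auto simp: inH_def)
qed

lemma psi_neg: "psi (- t) M = iota (psi t (iota M))"
  by (simp add: psi_def iota_mul mmul_assoc)

lemma red0_rev: "red0 v \<Longrightarrow> red0 (rev v)"
proof (induction v)
  case Nil then show ?case by simp
next
  case (Cons a v)
  then show ?case by (auto simp: red0_Cons red0_snoc last_rev)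
qed

lemma mpowi_0[simp]: "mpowi f 0 = mI" by (simp add: mpowi_def)

lemma weval_snoc: "xs \<noteq> [] \<Longrightarrow> weval f \<phi> (xs @ [b]) = weval f \<phi> (xs @ [0]) \<star> mpowi f b"
proof (induction xs)
  case Nil then show ?case by simp
next
  case (Cons a xs)
  show ?case
  proof (cases "xs = []")
    case True
    then show ?thesis by (simp add: mmul_assoc)
  next
    case False
    then show ?thesis using Cons by (simp add: weval_Cons2 mmul_assoc)
  qed
qed

lemma ll_Ap_left: "ll (Ap x \<star> M) = ll M" by (cases M) (simp add: Ap_def)
lemma ll_Ap_right: "ll (M \<star> Ap x) = ll M" by (cases M) (simp add: Ap_def)

lemma ll_weval_ends:
  assumes "mid \<noteq> []"
  shows "ll (weval genA \<phi> (m1 # mid @ [mn])) = ll (weval genA \<phi> (0 # mid @ [0]))"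
proof -
  have e1: "weval genA \<phi> (m1 # mid @ [mn]) = Ap (of_int m1) \<star> (\<phi> \<star> weval genA \<phi> (mid @ [mn]))"
    using weval_Cons2[of "mid @ [mn]" genA \<phi> m1] by (simp only: mpowi_genA) simp
  have e2: "weval genA \<phi> (mid @ [mn]) = weval genA \<phi> (mid @ [0]) \<star> Ap (of_int mn)"
    using weval_snoc[OF assms, of genA \<phi> mn] by (simp only: mpowi_genA)
  have e3: "weval genA \<phi> (0 # mid @ [0]) = \<phi> \<star> weval genA \<phi> (mid @ [0])"
    using weval_Cons2[of "mid @ [0]" genA \<phi> 0] by simp
  have "ll (weval genA \<phi> (m1 # mid @ [mn])) = ll ((\<phi> \<star> weval genA \<phi> (mid @ [0])) \<star> Ap (of_int mn))"
    unfolding e1 e2 mmul_assoc ll_Ap_left ..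
  also have "\<dots> = ll (weval genA \<phi> (0 # mid @ [0]))" unfolding ll_Ap_right e3 ..
  finally show ?thesis .
qed

lemma good_decomp:
  assumes "good_word w"
  shows "\<exists>m1 mid mn. w = m1 # mid @ [mn] \<and> midw mid"
proof -
  have len: "length w \<ge> 3" and nz: "\<forall>i. 1 \<le> i \<and> i < length w - 1 \<longrightarrow> w ! i \<noteq> 0"
    using assms by (auto simp: good_word_def)
  obtain m1 r where w: "w = m1 # r" using len by (cases w) auto
  have rne: "r \<noteq> []" using len w by auto
  define mid where "mid = butlast r"
  define mn where "mn = last r"
  have r: "r = mid @ [mn]" using rne by (simp add: mid_def mn_def)
  have midne: "mid \<noteq> []" using len w r by auto
  have "\<forall>x\<in>set mid. x \<noteq> 0"
  proof
    fix x assume "x \<in> set mid"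
    then obtain j where j: "j < length mid" "mid ! j = x" by (auto simp: in_set_conv_nth)
    have "w ! (Suc j) = x" using j w r by (simp add: nth_append)
    moreover have "1 \<le> Suc j \<and> Suc j < length w - 1" using j w r by simp
    ultimately show "x \<noteq> 0" using nz by metis
  qed
  then show ?thesis using w r midne by (auto simp: midw_def)
qed

lemma free_ne0: "Gamma_free \<delta> \<Longrightarrow> \<delta> \<noteq> 0"
proof
  assume f: "Gamma_free \<delta>" and d: "\<delta> = 0"
  have "\<not> psl_eq (feval \<delta> [(False, 1)]) mI" by (rule free_nontriv[OF f]) simp_all
  then show False using d by (simp add: feval_single syl_def)
qed



lemma psl_psi: "psl_eq a b \<Longrightarrow> psl_eq (psi t a) (psi t b)"
  by (auto simp: psl_eq_def)

lemma step:
  assumes fr: "Gamma_free \<delta>" and gw: "good_word w"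
  shows "\<exists>t. Gamma_free (wpoly w \<delta>) \<and>
    (\<forall>M. inH (wpoly w \<delta>) M \<longrightarrow> inH \<delta> (psi t M)) \<and>
    (\<forall>M. inH (wpoly w \<delta>) M \<longrightarrow> inH \<delta> (psi (- t) M)) \<and>
    \<not> (\<exists>M. inH (wpoly w \<delta>) M \<and> psl_eq (psi t M) (genB \<delta>))"
proof -
  obtain m1 mid mn where w: "w = m1 # mid @ [mn]" and mw: "midw mid"
    using good_decomp[OF gw] by blast
  interpret midw mid by (rule mw)
  have d0: "\<delta> \<noteq> 0" by (rule free_ne0[OF fr])
  define c where "c = csqrt \<delta>"
  have c2: "c^2 = \<delta>" by (simp add: c_def)
  have c0: "c \<noteq> 0" using d0 c2 by auto
  define W0 where "W0 = V c mid"
  have dW: "mdet W0 = 1" by (simp add: W0_def mdet_V[OF c0])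
  obtain p q r s where W: "W0 = Mat p q r s" by (cases W0)
  have det: "p * s - q * r = 1" using dW W by simp
  have X: "feval \<delta> (core mid) = W0 \<star> Ap (-1) \<star> madj W0"
    using core_eq[OF c0, of mid] c2 by (simp add: W0_def)
  have wp: "wpoly w \<delta> = r^2"
  proof -
    have "wpoly w \<delta> = (ll (weval genA (phi c) w))^2" using wpoly_ll[OF c0, of w] c2 by simp
    also have "ll (weval genA (phi c) w) = ll W0"
      using ll_weval_ends[OF ne, of "phi c" m1 mn] by (simp add: w W0_def V_def)
    finally show ?thesis using W by simp
  qed
  have core_evs: "core mid = evs mid (False, 1)" by (simp add: core_def evs_def)
  have rc: "red0 (core mid)" "core mid \<noteq> []" "fst (hd (core mid)) = False" "fst (last (core mid)) = False"
    unfolding core_evs using red0_evs[of "(False, 1)"] evs_ne evs_hd evs_last by auto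
  have r0: "r \<noteq> 0"
  proof
    assume r: "r = 0"
    define u where "u = core mid @ [(True, 1)] @ invw (core mid) @ [(True, -1)]"
    have XA: "W0 \<star> Ap (-1) \<star> madj W0 = Ap (- (p^2))"
      using W r det by (simp add: Ap_def power2_eq_square algebra_simps)
    have Xc: "feval \<delta> (core mid) = Ap (- (p^2))" using X XA by simp
    have fu: "feval \<delta> u = mI"
      using Xc by (simp add: u_def feval_append feval_Cons feval_invw syl_def)
    have r1: "red0 ([(True, 1)] @ invw (core mid) @ [(True, -1)])"
      using red0_invw[OF rc(1)] rc hd_invw[OF rc(2)] last_invw[OF rc(2)]
      by (simp add: red0_Cons red0_snoc)
    have "red0 u" unfolding u_def
      by (rule red0_append[OF rc(1) r1]) (use rc in simp)
    then show False using free_nontriv[OF fr, of u] fu by (simp add: u_def)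
  qed
  define t where "t = p / r"
  have tB: "psi t (genB (r^2)) = feval \<delta> (core mid)"
    unfolding X W psi_def t_def using r0 det
    by (simp add: Ap_def genB_def field_simps power2_eq_square)
  have PE: "psi t (feval (r^2) v) = feval \<delta> (E mid v)" for v
    by (rule psi_E[OF mw tB])
  have S4: "Gamma_free (r^2)"
    unfolding Gamma_free_def
  proof (intro allI impI notI)
    fix ws assume rw: "reduced_fword ws" and e: "psl_eq (feval (r^2) ws) mI"
    have "psl_eq (feval \<delta> (E mid ws)) mI" using psl_psi[OF e, of t] PE by simp
    moreover have "red0 (E mid ws)" "E mid ws \<noteq> []" using rw red0_E E_ne by (auto simp: reduced_red0)
    ultimately show False using free_nontriv[OF fr] by blast
  qed
  have S1: "inH \<delta> (psi t M)" if hM: "inH (r^2) M" for M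
  proof -
    obtain v where "feval (r^2) v = M" using hM unfolding inH_def by blast
    then have "feval \<delta> (E mid v) = psi t M" using PE[of v] by simp
    then show ?thesis unfolding inH_def by blast
  qed
  have S2: "inH \<delta> (psi (- t) M)" if "inH (r^2) M" for M
    unfolding psi_neg by (rule inH_iota[OF S1[OF inH_iota[OF that]]])
  have S3: "\<not> (\<exists>M. inH (r^2) M \<and> psl_eq (psi t M) (genB \<delta>))"
  proof
    assume "\<exists>M. inH (r^2) M \<and> psl_eq (psi t M) (genB \<delta>)"
    then obtain M where M: "inH (r^2) M" "psl_eq (psi t M) (genB \<delta>)" by blast
    obtain v where v: "red0 v" "feval (r^2) v = M" using inH_red[OF M(1)] by blast
    have "psl_eq (feval \<delta> (E mid v)) (feval \<delta> [(False, 1)])"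
      using M(2) PE[of v] v(2) by (simp add: feval_single syl_def)
    moreover have "red0 [(False, 1::int)]" by simp
    ultimately have "E mid v = [(False, 1)]" using uniq[OF fr red0_E[OF v(1)]] by blast
    then show False using E_not_B by simp
  qed
  show ?thesis unfolding wp using S1 S2 S3 S4 by blast
qed



lemma all_free:
  assumes fr: "Gamma_free \<gamma>" and gw: "good_word w"
  shows "Gamma_free ((wpoly w ^^ j) \<gamma>)"
proof (induction j)
  case 0 then show ?case using fr by simp
next
  case (Suc j)
  then show ?case using step[OF Suc gw] by auto
qed

lemma chain:
  assumes fr: "Gamma_free \<gamma>" and gw: "good_word w"
  shows "\<exists>s. (\<forall>M. inH ((wpoly w ^^ (i + l)) \<gamma>) M \<longrightarrow> inH ((wpoly w ^^ i) \<gamma>) (psi s M)) \<and>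
             (\<forall>M. inH ((wpoly w ^^ (i + l)) \<gamma>) M \<longrightarrow> inH ((wpoly w ^^ i) \<gamma>) (psi (- s) M))"
proof (induction l arbitrary: i)
  case 0
  show ?case by (intro exI[of _ 0]) simp
next
  case (Suc l)
  obtain t where t1: "\<forall>M. inH (wpoly w ((wpoly w ^^ i) \<gamma>)) M \<longrightarrow> inH ((wpoly w ^^ i) \<gamma>) (psi t M)"
    and t2: "\<forall>M. inH (wpoly w ((wpoly w ^^ i) \<gamma>)) M \<longrightarrow> inH ((wpoly w ^^ i) \<gamma>) (psi (- t) M)"
    using step[OF all_free[OF fr gw, of i] gw] by blast
  obtain s where s1: "\<forall>M. inH ((wpoly w ^^ (Suc i + l)) \<gamma>) M \<longrightarrow> inH ((wpoly w ^^ Suc i) \<gamma>) (psi s M)"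
    and s2: "\<forall>M. inH ((wpoly w ^^ (Suc i + l)) \<gamma>) M \<longrightarrow> inH ((wpoly w ^^ Suc i) \<gamma>) (psi (- s) M)"
    using Suc.IH[of "Suc i"] by blast
  have e: "i + Suc l = Suc i + l" by simp
  show ?case
  proof (intro exI[of _ "t + s"] conjI allI impI)
    fix M assume "inH ((wpoly w ^^ (i + Suc l)) \<gamma>) M"
    then have "inH ((wpoly w ^^ Suc i) \<gamma>) (psi s M)" using s1 e by simp
    then have "inH ((wpoly w ^^ i) \<gamma>) (psi t (psi s M))" using t1 by simp
    then show "inH ((wpoly w ^^ i) \<gamma>) (psi (t + s) M)" by (simp add: psi_psi)
  next
    fix M assume "inH ((wpoly w ^^ (i + Suc l)) \<gamma>) M"
    then have "inH ((wpoly w ^^ Suc i) \<gamma>) (psi (- s) M)" using s2 e by simp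
    then have "inH ((wpoly w ^^ i) \<gamma>) (psi (- t) (psi (- s) M))" using t2 by simp
    then show "inH ((wpoly w ^^ i) \<gamma>) (psi (- (t + s)) M)" by (simp add: psi_psi)
  qed
qed

lemma periodic_nonfree:
  assumes gw: "good_word w" and k: "k \<ge> 1"
    and per: "(wpoly w ^^ k) ((wpoly w ^^ n) \<gamma>) = (wpoly w ^^ n) \<gamma>"
  shows "\<not> Gamma_free \<gamma>"
proof
  assume fr: "Gamma_free \<gamma>"
  define D where "D j = (wpoly w ^^ j) \<gamma>" for j
  have Dk: "D (n + k) = D n" using per by (simp add: D_def funpow_add add.commute)
  have DS: "D (Suc n) = wpoly w (D n)" by (simp add: D_def)
  obtain t where t1: "\<forall>M. inH (wpoly w (D n)) M \<longrightarrow> inH (D n) (psi t M)"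
    and t2: "\<forall>M. inH (wpoly w (D n)) M \<longrightarrow> inH (D n) (psi (- t) M)"
    and t3: "\<not> (\<exists>M. inH (wpoly w (D n)) M \<and> psl_eq (psi t M) (genB (D n)))"
    using step[OF all_free[OF fr gw, of n] gw] unfolding D_def by blast
  obtain s where s1: "\<forall>M. inH (D (Suc n + (k - 1))) M \<longrightarrow> inH (D (Suc n)) (psi s M)"
    and s2: "\<forall>M. inH (D (Suc n + (k - 1))) M \<longrightarrow> inH (D (Suc n)) (psi (- s) M)"
    using chain[OF fr gw, of "Suc n" "k - 1"] unfolding D_def by blast
  have e: "Suc n + (k - 1) = n + k" using k by simp
  define B where "B = genB (D n)"
  have B: "inH (D n) B" unfolding inH_def B_def
    by (intro exI[of _ "[(False, 1)]"]) (simp add: feval_single syl_def)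
  have M0: "inH (D (Suc n)) (psi (- s) B)" using s2 B e Dk by simp
  have M0': "inH (D n) (psi (- t) (psi (- s) B))" using t2 M0 DS by simp
  have M1: "inH (D (Suc n)) (psi s (psi (- t) (psi (- s) B)))" using s1 M0' e Dk by simp
  have "psi t (psi s (psi (- t) (psi (- s) B))) = B" by (simp add: psi_psi)
  then show False using t3 M1 DS unfolding B_def by auto
qed

theorem theorem14:
  fixes \<gamma> :: complex
  assumes "\<gamma> \<noteq> 0"
  shows "(\<not> Gamma_free \<gamma> \<longleftrightarrow> (\<exists>w. good_word w \<and> wpoly w \<gamma> = \<gamma>))
     \<and> ((\<exists>w n k. good_word w \<and> k \<ge> 1 \<and>
            (wpoly w ^^ k) ((wpoly w ^^ n) \<gamma>) = (wpoly w ^^ n) \<gamma>)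
        \<longrightarrow> \<not> Gamma_free \<gamma>)"
proof (intro conjI impI iffI)
  assume "\<not> Gamma_free \<gamma>"
  then show "\<exists>w. good_word w \<and> wpoly w \<gamma> = \<gamma>" using forward[OF assms] by blast
next
  assume "\<exists>w. good_word w \<and> wpoly w \<gamma> = \<gamma>"
  then obtain w where "good_word w" "wpoly w \<gamma> = \<gamma>" by blast
  then show "\<not> Gamma_free \<gamma>" using periodic_nonfree[of w 1 0 \<gamma>] by simp
next
  assume "\<exists>w n k. good_word w \<and> k \<ge> 1 \<and> (wpoly w ^^ k) ((wpoly w ^^ n) \<gamma>) = (wpoly w ^^ n) \<gamma>"
  then show "\<not> Gamma_free \<gamma>" using periodic_nonfree by blast
qed


end
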